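(* Let $d\geq1$ be an integer and $\mathbb G=V_1\times V_2$ a step-two Carnot group. Then $\mathcal A_h(\mathbb G)=\mathcal A(V_1\times V_2)$ if and only if $\mathcal A_h(\mathbb G\times\mathbb R^d)=\mathcal A((V_1\oplus\mathbb R^d)\times V_2)$.
   Context: A step-two Carnot group is $\mathbb G=V_1\times V_2$ ($V_1,V_2$ finite-dimensional real vector spaces, $V_2\ne\{0\}$) with a bilinear skew-symmetric $[\cdot,\cdot]:V_1\times V_1\to V_2$ whose image spans $V_2$, and group law $(x,z)\cdot(x',z')=(x+x',z+z'+[x,x'])$. $\mathcal A_h(\mathbb G)$ is the space of maps $f:\mathbb G\to\mathbb R$ such that for all $(x,z)\in\mathbb G$, $y\in V_1$, $t\mapsto f((x,z)\cdot(ty,0))$ is affine; $\mathcal A(W)$ is the space of maps affine in the usual sense on a vector space $W$. $\mathbb G\times\mathbb R^d$ is the step-two Carnot group $(V_1\oplus\mathbb R^d)\times V_2$ with bracket $[x+u,x'+u']:=[x,x']$ for $x,x'\in V_1$, $u,u'\in\mathbb R^d$. *)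

theory Defs
  imports "HOL-Analysis.Analysis"
begin

definition step2_bracket :: "('a::real_vector \<Rightarrow> 'a \<Rightarrow> 'b::real_vector) \<Rightarrow> bool" where
  "step2_bracket br \<longleftrightarrow>
     bilinear br \<and> (\<forall>x y. br x y = - br y x) \<and>
     span {br x y | x y. True} = UNIV \<and> (UNIV :: 'b set) \<noteq> {0}"

definition cg_mult :: "('a::real_vector \<Rightarrow> 'a \<Rightarrow> 'b::real_vector) \<Rightarrow> 'a \<times> 'b \<Rightarrow> 'a \<times> 'b \<Rightarrow> 'a \<times> 'b" where
  "cg_mult br p q = (fst p + fst q, snd p + snd q + br (fst p) (fst q))"

definition horiz_affine_maps :: "('a::real_vector \<Rightarrow> 'a \<Rightarrow> 'b::real_vector) \<Rightarrow> ('a \<times> 'b \<Rightarrow> real) set" where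
  "horiz_affine_maps br = {f. \<forall>p y. \<exists>a b::real. \<forall>t::real.
       f (cg_mult br p (t *\<^sub>R y, 0)) = a + t * b}"

definition affine_maps :: "('w::real_vector \<Rightarrow> real) set" where
  "affine_maps = {f. \<exists>l c. linear l \<and> (\<forall>w. f w = l w + c)}"

definition ext_bracket :: "('a::real_vector \<Rightarrow> 'a \<Rightarrow> 'b::real_vector) \<Rightarrow> ('a \<times> 'c::real_vector) \<Rightarrow> ('a \<times> 'c) \<Rightarrow> 'b" where
  "ext_bracket br p q = br (fst p) (fst q)"

end

theory Submission
  imports Defs
begin

lemma lines_affine:
  fixes f :: "'w::real_vector \<Rightarrow> real"
  assumes H: "\<And>p v. \<exists>a b. \<forall>t. f (p + t *\<^sub>R v) = a + t * b"
  shows "f \<in> affine_maps"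
proof -
  define l where "l w = f w - f 0" for w
  have sc: "l (c *\<^sub>R w) = c * l w" for c w
  proof -
    obtain a b where ab: "\<forall>t. f (0 + t *\<^sub>R w) = a + t * b" using H by blast
    from ab[rule_format, of 0] ab[rule_format, of 1] ab[rule_format, of c]
    show ?thesis by (simp add: l_def algebra_simps)
  qed
  have ad: "l (u + v) = l u + l v" for u v
  proof -
    obtain a b where ab: "\<forall>t. f (2 *\<^sub>R u + t *\<^sub>R (2 *\<^sub>R (v - u))) = a + t * b" using H by blast
    have e1: "2 *\<^sub>R u + (1/2::real) *\<^sub>R (2 *\<^sub>R (v - u)) = u + v"
    proof -
      have "(1/2::real) *\<^sub>R (2 *\<^sub>R (v - u)) = v - u" by simp
      then show ?thesis by (simp add: scaleR_2 algebra_simps)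
    qed
    have e2: "2 *\<^sub>R u + (1::real) *\<^sub>R (2 *\<^sub>R (v - u)) = 2 *\<^sub>R v"
      by (simp add: algebra_simps scaleR_2)
    from ab[rule_format, of 0] ab[rule_format, of 1] ab[rule_format, of "1/2"]
    have "f (u + v) = (f (2 *\<^sub>R u) + f (2 *\<^sub>R v)) / 2"
      unfolding e1 e2 by simp
    moreover have "l (2 *\<^sub>R u) = 2 * l u" "l (2 *\<^sub>R v) = 2 * l v" using sc by auto
    ultimately show ?thesis by (simp add: l_def)
  qed
  have "linear l" by (rule linearI) (use ad sc in auto)
  moreover have "\<forall>w. f w = l w + f 0" by (simp add: l_def)
  ultimately show ?thesis unfolding affine_maps_def by blast
qed

lemma affine_lines:
  fixes f :: "'w::real_vector \<Rightarrow> real"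
  assumes "f \<in> affine_maps"
  shows "\<exists>a b. \<forall>t. f (p + t *\<^sub>R v) = a + t * b"
proof -
  obtain l c where "linear l" "\<forall>w. f w = l w + c" using assms unfolding affine_maps_def by blast
  then show ?thesis
    by (intro exI[of _ "l p + c"] exI[of _ "l v"]) (simp add: linear_add linear_scale)
qed

lemma affine_sub_horiz:
  fixes br :: "'a::real_vector \<Rightarrow> 'a \<Rightarrow> 'b::real_vector"
  assumes lin: "\<And>x t y. br x (t *\<^sub>R y) = t *\<^sub>R br x y"
  shows "affine_maps \<subseteq> horiz_affine_maps br"
proof
  fix f :: "'a \<times> 'b \<Rightarrow> real" assume f: "f \<in> affine_maps"
  show "f \<in> horiz_affine_maps br"
    unfolding horiz_affine_maps_def
  proof (clarify)
    fix p :: "'a \<times> 'b" and y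
    obtain a b where ab: "\<forall>t. f (p + t *\<^sub>R (y, br (fst p) y)) = a + t * b"
      using affine_lines[OF f] by blast
    have "f (cg_mult br p (t *\<^sub>R y, 0)) = a + t * b" for t
      using ab[rule_format, of t] by (cases p) (simp add: cg_mult_def lin)
    then show "\<exists>a b. \<forall>t. f (cg_mult br p (t *\<^sub>R y, 0)) = a + t * b" by blast
  qed
qed

lemma plane_lemma:
  fixes g :: "real \<Rightarrow> real \<Rightarrow> real"
  assumes H: "\<And>s0 t0 m. \<exists>a b. \<forall>s. g (s0 + s) (t0 + m * s) = a + s * b"
  shows "\<exists>a b. \<forall>t. g 0 t = a + t * b"
proof -
  have hor: "g s t = g 0 t + s * (g 1 t - g 0 t)" for s t
  proof -
    obtain a b where ab: "\<forall>s. g (0 + s) (t + 0 * s) = a + s * b" using H by blast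
    from ab[rule_format, of 0] ab[rule_format, of 1] ab[rule_format, of s] show ?thesis by simp
  qed
  have mid: "2 * g 0 ((c + d) / 2) = g (-1) c + g 1 d" for c d
  proof -
    obtain a b where ab: "\<forall>s. g (-1 + s) (c + ((d - c)/2) * s) = a + s * b" using H by blast
    from ab[rule_format, of 0] ab[rule_format, of 1] ab[rule_format, of 2] show ?thesis
      by (simp add: field_simps)
  qed
  have bc: "g 1 c - g 0 c = g 1 d - g 0 d" for c d
  proof -
    have "2 * g 0 ((c + d) / 2) = 2 * g 0 ((d + c) / 2)" by (simp add: add.commute)
    then have "g (-1) c + g 1 d = g (-1) d + g 1 c" using mid[of c d] mid[of d c] by simp
    moreover have "g (-1) c = 2 * g 0 c - g 1 c" "g (-1) d = 2 * g 0 d - g 1 d"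
      using hor[of "-1" c] hor[of "-1" d] by simp_all
    ultimately show ?thesis by simp
  qed
  obtain a b where ab: "\<forall>s. g (0 + s) (0 + 1 * s) = a + s * b" using H by blast
  have "g 0 t = a + t * (b - (g 1 0 - g 0 0))" for t
    using ab[rule_format, of t] hor[of t t] bc[of t 0] by (simp add: algebra_simps scaleR_2)
  then show ?thesis by blast
qed

theorem proposition6p3:
  fixes br :: "'a::euclidean_space \<Rightarrow> 'a \<Rightarrow> 'b::euclidean_space"
  assumes "step2_bracket br"
  shows "horiz_affine_maps br = (affine_maps :: ('a \<times> 'b \<Rightarrow> real) set) \<longleftrightarrow>
         horiz_affine_maps (ext_bracket br :: 'a \<times> (real^'n) \<Rightarrow> 'a \<times> (real^'n) \<Rightarrow> 'b)
           = (affine_maps :: (('a \<times> (real^'n)) \<times> 'b \<Rightarrow> real) set)"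
proof -
  have bil: "bilinear br" using assms unfolding step2_bracket_def by blast
  have lin1: "br x (t *\<^sub>R y) = t *\<^sub>R br x y" for x t y
    using bil unfolding bilinear_def by (simp add: linear_scale)
  have lin2: "ext_bracket br p (t *\<^sub>R q) = t *\<^sub>R ext_bracket br p q"
    for p q :: "'a \<times> (real^'n)" and t
    by (simp add: ext_bracket_def lin1)
  have sub1: "(affine_maps :: ('a \<times> 'b \<Rightarrow> real) set) \<subseteq> horiz_affine_maps br"
    by (rule affine_sub_horiz) (rule lin1)
  have sub2: "(affine_maps :: (('a \<times> (real^'n)) \<times> 'b \<Rightarrow> real) set)
      \<subseteq> horiz_affine_maps (ext_bracket br :: 'a \<times> (real^'n) \<Rightarrow> 'a \<times> (real^'n) \<Rightarrow> 'b)"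
    by (rule affine_sub_horiz) (rule lin2)
  show ?thesis
  proof
    assume E1: "horiz_affine_maps br = (affine_maps :: ('a \<times> 'b \<Rightarrow> real) set)"
    have "horiz_affine_maps (ext_bracket br :: 'a \<times> (real^'n) \<Rightarrow> 'a \<times> (real^'n) \<Rightarrow> 'b)
           \<subseteq> (affine_maps :: (('a \<times> (real^'n)) \<times> 'b \<Rightarrow> real) set)"
    proof
      fix F :: "('a \<times> (real^'n)) \<times> 'b \<Rightarrow> real"
      assume F: "F \<in> horiz_affine_maps (ext_bracket br)"
      have K: "\<exists>a b. \<forall>t. F (p + t *\<^sub>R w) = a + t * b"
        if y0: "fst (fst w) \<noteq> 0" for p w
      proof -
        obtain x0 u0 z0 y v \<zeta> where pw: "p = ((x0, u0), z0)" "w = ((y, v), \<zeta>)"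
          by (metis prod.collapse)
        have yne: "y \<noteq> 0" using y0 pw by simp
        define \<Lambda> where "\<Lambda> x = ((x \<bullet> y) / (y \<bullet> y)) *\<^sub>R v" for x
        have \<Lambda>add: "\<Lambda> (x + t *\<^sub>R x') = \<Lambda> x + t *\<^sub>R \<Lambda> x'" for x x' t
          by (simp add: \<Lambda>_def inner_add_left add_divide_distrib scaleR_add_left)
        have \<Lambda>y: "\<Lambda> y = v" using yne by (simp add: \<Lambda>_def)
        define f where "f q = F ((fst q, u0 - \<Lambda> x0 + \<Lambda> (fst q)), snd q)" for q :: "'a \<times> 'b"
        have "f \<in> horiz_affine_maps br"
          unfolding horiz_affine_maps_def
        proof (clarify)
          fix q :: "'a \<times> 'b" and y'
          obtain a b where ab: "\<forall>t. F (cg_mult (ext_bracket br) ((fst q, u0 - \<Lambda> x0 + \<Lambda> (fst q)), snd q)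
              (t *\<^sub>R (y', \<Lambda> y'), 0)) = a + t * b"
            using F unfolding horiz_affine_maps_def by blast
          have "f (cg_mult br q (t *\<^sub>R y', 0)) = a + t * b" for t
            using ab[rule_format, of t]
            by (simp add: f_def cg_mult_def ext_bracket_def \<Lambda>add algebra_simps)
          then show "\<exists>a b. \<forall>t. f (cg_mult br q (t *\<^sub>R y', 0)) = a + t * b" by blast
        qed
        then have "f \<in> affine_maps" using E1 by simp
        then obtain a b where ab: "\<forall>t. f ((x0, z0) + t *\<^sub>R (y, \<zeta>)) = a + t * b"
          using affine_lines by blast
        have "F (p + t *\<^sub>R w) = a + t * b" for t
          using ab[rule_format, of t] by (simp add: f_def pw \<Lambda>add \<Lambda>y)
        then show ?thesis by blast
      qed
      obtain y0 :: 'a where y0: "y0 \<noteq> 0"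
        by (metis ex_in_conv nonempty_Basis nonzero_Basis)
      define e :: "('a \<times> (real^'n)) \<times> 'b" where "e = ((y0, 0), 0)"
      have "\<exists>a b. \<forall>t. F (p + t *\<^sub>R w) = a + t * b" for p w
      proof (cases "fst (fst w) = 0")
        case False then show ?thesis using K by blast
      next
        case True
        define g where "g s t = F (p + s *\<^sub>R e + t *\<^sub>R w)" for s t
        have "\<exists>a b. \<forall>s. g (s0 + s) (t0 + m * s) = a + s * b" for s0 t0 m
        proof -
          have "fst (fst (e + m *\<^sub>R w)) \<noteq> 0" using True y0 by (simp add: e_def)
          then obtain a b where ab: "\<forall>s. F ((p + s0 *\<^sub>R e + t0 *\<^sub>R w) + s *\<^sub>R (e + m *\<^sub>R w)) = a + s * b"
            using K by blast
          have "g (s0 + s) (t0 + m * s) = a + s * b" for s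
            using ab[rule_format, of s] by (simp add: g_def algebra_simps)
          then show ?thesis by blast
        qed
        then obtain a b where "\<forall>t. g 0 t = a + t * b" using plane_lemma by blast
        then show ?thesis by (auto simp: g_def)
      qed
      then show "F \<in> affine_maps" by (rule lines_affine)
    qed
    with sub2 show "horiz_affine_maps (ext_bracket br :: 'a \<times> (real^'n) \<Rightarrow> 'a \<times> (real^'n) \<Rightarrow> 'b)
           = (affine_maps :: (('a \<times> (real^'n)) \<times> 'b \<Rightarrow> real) set)" by blast
  next
    assume E2: "horiz_affine_maps (ext_bracket br :: 'a \<times> (real^'n) \<Rightarrow> 'a \<times> (real^'n) \<Rightarrow> 'b)
           = (affine_maps :: (('a \<times> (real^'n)) \<times> 'b \<Rightarrow> real) set)"
    have "horiz_affine_maps br \<subseteq> (affine_maps :: ('a \<times> 'b \<Rightarrow> real) set)"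
    proof
      fix f :: "'a \<times> 'b \<Rightarrow> real"
      assume f: "f \<in> horiz_affine_maps br"
      define F :: "('a \<times> (real^'n)) \<times> 'b \<Rightarrow> real" where "F w = f (fst (fst w), snd w)" for w
      have "F \<in> horiz_affine_maps (ext_bracket br)"
        unfolding horiz_affine_maps_def
      proof (clarify)
        fix p :: "('a \<times> (real^'n)) \<times> 'b" and q :: "'a \<times> (real^'n)"
        obtain a b where ab: "\<forall>t. f (cg_mult br (fst (fst p), snd p) (t *\<^sub>R fst q, 0)) = a + t * b"
          using f unfolding horiz_affine_maps_def by blast
        have "F (cg_mult (ext_bracket br) p (t *\<^sub>R q, 0)) = a + t * b" for t
          using ab[rule_format, of t] by (simp add: F_def cg_mult_def ext_bracket_def)
        then show "\<exists>a b. \<forall>t. F (cg_mult (ext_bracket br) p (t *\<^sub>R q, 0)) = a + t * b" by blast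
      qed
      then have FA: "F \<in> affine_maps" using E2 by simp
      have "\<exists>a b. \<forall>t. f (p + t *\<^sub>R v) = a + t * b" for p v
      proof -
        obtain a b where ab: "\<forall>t. F (((fst p, 0), snd p) + t *\<^sub>R ((fst v, 0), snd v)) = a + t * b"
          using affine_lines[OF FA] by blast
        have "f (p + t *\<^sub>R v) = a + t * b" for t
          using ab[rule_format, of t] by (cases p, cases v) (simp add: F_def)
        then show ?thesis by blast
      qed
      then show "f \<in> affine_maps" by (rule lines_affine)
    qed
    with sub1 show "horiz_affine_maps br = (affine_maps :: ('a \<times> 'b \<Rightarrow> real) set)" by blast
  qed
qed

end
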